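(* Let $G$ be a graph and $(v_1,\dots,v_k)$ a list of (not necessarily distinct) vertices of $G$. Let $G_{m_1,\dots,m_k}$ be the graph obtained by attaching, for each $i$, one endvertex of a new $m_i$-vertex path to $v_i$ by an edge (so $G_{m_1,\dots,m_k}$ has $m_1+\dots+m_k$ more vertices than $G$), and let $R_{m_1,\dots,m_k}(z)$ be its reciprocal polynomial. Then there are integer polynomials $P_{(\epsilon_1,\dots,\epsilon_k)}(z)$, $\epsilon_i\in\{0,1\}$, depending on $G$ and $(v_1,\dots,v_k)$ but not on $m_1,\dots,m_k$, such that whenever all $m_i\ge2$, $$(y^2-1)^kR_{m_1,\dots,m_k}(z)=\sum_{\epsilon_1,\dots,\epsilon_k\in\{0,1\}}y^{2\sum_i\epsilon_im_i}P_{(\epsilon_1,\dots,\epsilon_k)}(z).$$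
   Context: Graphs are finite simple graphs; $\chi_G$ is the characteristic polynomial of the adjacency matrix of an $n$-vertex graph $G$. The reciprocal polynomial is $R_G(z)=z^n\chi_G(z+1/z)$ if $G$ is nonbipartite and $R_G(z)=z^{n/2}\chi_G(\sqrt z+1/\sqrt z)$ if $G$ is bipartite. Here $y=\sqrt z$ if the graphs are bipartite, and $y=z$ otherwise. *)

theory Defs
  imports "HOL-Computational_Algebra.Polynomial" "Jordan_Normal_Form.Char_Poly"
begin

definition simple_graph :: "nat \<Rightarrow> (nat \<Rightarrow> nat \<Rightarrow> bool) \<Rightarrow> bool" where
  "simple_graph n E \<longleftrightarrow> (\<forall>a b. E a b \<longrightarrow> a < n \<and> b < n \<and> a \<noteq> b \<and> E b a)"

definition adj_matrix :: "nat \<Rightarrow> (nat \<Rightarrow> nat \<Rightarrow> bool) \<Rightarrow> int mat" where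
  "adj_matrix n E = mat n n (\<lambda>(i, j). if E i j then 1 else 0)"

definition graph_char_poly :: "nat \<Rightarrow> (nat \<Rightarrow> nat \<Rightarrow> bool) \<Rightarrow> int poly" where
  "graph_char_poly n E = char_poly (adj_matrix n E)"

definition bipartite :: "nat \<Rightarrow> (nat \<Rightarrow> nat \<Rightarrow> bool) \<Rightarrow> bool" where
  "bipartite n E \<longleftrightarrow> (\<exists>c :: nat \<Rightarrow> bool. \<forall>a<n. \<forall>b<n. E a b \<longrightarrow> c a \<noteq> c b)"

text \<open>Writing chi_G(x) = sum_j c_j x^j:
  nonbipartite: z^n chi(z + 1/z) = sum_j c_j z^(n-j) (z^2+1)^j;
  bipartite:    z^(n/2) chi(sqrt z + 1/sqrt z) = sum_j c_j z^((n-j)/2) (z+1)^j,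
  where only j with n-j even occur (c_j = 0 otherwise for bipartite graphs).\<close>
definition reciprocal_poly :: "nat \<Rightarrow> (nat \<Rightarrow> nat \<Rightarrow> bool) \<Rightarrow> int poly" where
  "reciprocal_poly n E =
     (let c = coeff (graph_char_poly n E) in
      if bipartite n E
      then (\<Sum>j\<le>n. if even (n - j) then [:c j:] * ([:0,1:] ^ ((n - j) div 2) * [:1,1:] ^ j) else 0)
      else (\<Sum>j\<le>n. [:c j:] * ([:0,1:] ^ (n - j) * [:1,0,1:] ^ j)))"

text \<open>Attaching paths: for each i < length vs, a new path with ms!i vertices
  occupying the vertices off i, ..., off i + ms!i - 1 (off i = n + ms!0 + ... + ms!(i-1)),
  whose first vertex off i is joined to vs!i.\<close>
definition path_offset :: "nat \<Rightarrow> nat list \<Rightarrow> nat \<Rightarrow> nat" where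
  "path_offset n ms i = n + sum_list (take i ms)"

definition attach_dir :: "nat \<Rightarrow> nat list \<Rightarrow> nat list \<Rightarrow> nat \<Rightarrow> nat \<Rightarrow> bool" where
  "attach_dir n vs ms a b \<longleftrightarrow>
     (\<exists>i < length vs. 0 < ms ! i \<and>
        ((a = vs ! i \<and> b = path_offset n ms i) \<or>
         (path_offset n ms i \<le> a \<and> b = a + 1 \<and> b < path_offset n ms i + ms ! i)))"

definition attach_paths :: "nat \<Rightarrow> (nat \<Rightarrow> nat \<Rightarrow> bool) \<Rightarrow> nat list \<Rightarrow> nat list \<Rightarrow> nat \<Rightarrow> nat \<Rightarrow> bool" where
  "attach_paths n E vs ms a b \<longleftrightarrow> E a b \<or> attach_dir n vs ms a b \<or> attach_dir n vs ms b a"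

end

theory Submission
  imports Defs
begin

lemma det_leaf:
  fixes C :: "'a::comm_ring_1 mat"
  assumes C: "C \<in> carrier_mat (Suc (Suc d)) (Suc (Suc d))"
    and u: "u = Suc p" "u < Suc (Suc d)"
    and row: "\<And>j. j < Suc (Suc d) \<Longrightarrow> j \<noteq> u \<Longrightarrow> j \<noteq> p \<Longrightarrow> C $$ (u, j) = 0"
    and col: "\<And>r. r < Suc (Suc d) \<Longrightarrow> r \<noteq> u \<Longrightarrow> r \<noteq> p \<Longrightarrow> C $$ (r, u) = 0"
  shows "det C = C $$ (u,u) * det (mat_delete C u u)
           - C $$ (u,p) * C $$ (p,u) * det (mat_delete (mat_delete C u p) p p)"
proof -
  let ?M = "mat_delete C u p"
  have M: "?M \<in> carrier_mat (Suc d) (Suc d)" using mat_delete_carrier[OF C] by simp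
  have "det C = (\<Sum>j<Suc (Suc d). C $$ (u,j) * cofactor C u j)"
    by (rule laplace_expansion_row[OF C u(2)])
  also have "\<dots> = (\<Sum>j\<in>{p,u}. C $$ (u,j) * cofactor C u j)"
    by (rule sum.mono_neutral_right) (use u row in auto)
  also have "\<dots> = C $$ (u,p) * cofactor C u p + C $$ (u,u) * cofactor C u u"
    using u by simp
  also have "cofactor C u u = det (mat_delete C u u)"
    unfolding cofactor_def by simp
  finally have e1: "det C = C $$ (u,p) * cofactor C u p + C $$ (u,u) * det (mat_delete C u u)" .
  have "det ?M = (\<Sum>r<Suc d. ?M $$ (r,p) * cofactor ?M r p)"
    by (rule laplace_expansion_column[OF M]) (use u in auto)
  also have "\<dots> = (\<Sum>r\<in>{p}. ?M $$ (r,p) * cofactor ?M r p)"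
  proof (rule sum.mono_neutral_right)
    show "\<forall>r\<in>{..<Suc d} - {p}. ?M $$ (r, p) * cofactor ?M r p = 0"
    proof
      fix r assume r: "r \<in> {..<Suc d} - {p}"
      have "?M $$ (r,p) = C $$ (if r < u then r else Suc r, u)"
        unfolding mat_delete_def using C r u by auto
      also have "\<dots> = 0" using r u by (intro col) auto
      finally show "?M $$ (r, p) * cofactor ?M r p = 0" by simp
    qed
  qed (use u in auto)
  finally have e3: "det ?M = ?M $$ (p,p) * cofactor ?M p p" by simp
  have "?M $$ (p,p) = C $$ (p,u)"
    unfolding mat_delete_def using C u by auto
  with e3 have e2: "det ?M = C $$ (p,u) * cofactor ?M p p" by simp
  have "det C = C $$ (u,p) * ((-1)^(u+p) * (C $$ (p,u) * ((-1)^(p+p) * det (mat_delete ?M p p))))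
     + C $$ (u,u) * det (mat_delete C u u)"
    using e1 e2 unfolding cofactor_def by simp
  moreover have "(-1::'a)^(u+p) = -1" using u by (simp add: power_add)
  moreover have "(-1::'a)^(p+p) = 1" by (simp add: power_add flip: power_mult_distrib)
  ultimately show ?thesis by (simp add: algebra_simps)
qed

definition sh :: "nat \<Rightarrow> nat \<Rightarrow> nat" where
  "sh u a = (if a < u then a else Suc a)"

definition del :: "nat \<Rightarrow> (nat \<Rightarrow> nat \<Rightarrow> bool) \<Rightarrow> nat \<Rightarrow> nat \<Rightarrow> bool" where
  "del u H a b = H (sh u a) (sh u b)"

lemma mat_delete_idx:
  assumes "dim_row A = Suc n" "dim_col A = Suc m" "i < n" "j < m"
  shows "mat_delete A a b $$ (i,j) = A $$ (sh a i, sh b j)"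
  using assms unfolding mat_delete_def sh_def by auto

lemma cpm_dims[simp]: "dim_row (char_poly_matrix (adj_matrix N H)) = N"
   "dim_col (char_poly_matrix (adj_matrix N H)) = N"
  unfolding adj_matrix_def char_poly_matrix_def by auto

lemma cpm_entry:
  assumes "i < N" "j < N"
  shows "char_poly_matrix (adj_matrix N H) $$ (i,j) =
     (if i = j then [:0,1:] else 0) + (if H i j then [:-1:] else 0)"
  using assms unfolding char_poly_matrix_def adj_matrix_def by auto

lemma cpm_carrier: "char_poly_matrix (adj_matrix N H) \<in> carrier_mat N N"
  unfolding adj_matrix_def by simp

lemma cpm_del:
  "mat_delete (char_poly_matrix (adj_matrix (Suc N) H)) u u = char_poly_matrix (adj_matrix N (del u H))"
proof (rule eq_matI)
  fix i j assume ij: "i < dim_row (char_poly_matrix (adj_matrix N (del u H)))"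
     "j < dim_col (char_poly_matrix (adj_matrix N (del u H)))"
  hence ij': "i < N" "j < N" using cpm_carrier[of N "del u H"] by auto
  have "sh u i < Suc N" "sh u j < Suc N" using ij' unfolding sh_def by auto
  moreover have "(sh u i = sh u j) = (i = j)" unfolding sh_def by auto
  ultimately show "mat_delete (char_poly_matrix (adj_matrix (Suc N) H)) u u $$ (i, j) =
         char_poly_matrix (adj_matrix N (del u H)) $$ (i, j)"
    using ij' by (simp add: mat_delete_idx cpm_entry del_def)
qed auto

lemma cpm_del2:
  assumes "u = Suc p"
  shows "mat_delete (mat_delete (char_poly_matrix (adj_matrix (Suc (Suc N)) H)) u p) p p
    = char_poly_matrix (adj_matrix N (del p (del u H)))"
proof (rule eq_matI)
  fix i j assume ij: "i < dim_row (char_poly_matrix (adj_matrix N (del p (del u H))))"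
     "j < dim_col (char_poly_matrix (adj_matrix N (del p (del u H))))"
  hence ij': "i < N" "j < N" using cpm_carrier[of N "del p (del u H)"] by auto
  have "sh u (sh p i) < Suc (Suc N)" "sh u (sh p j) < Suc (Suc N)" using ij' unfolding sh_def by auto
  moreover have "(sh u (sh p i) = sh u (sh p j)) = (i = j)" unfolding sh_def by auto
  moreover have "sh p (sh p j) = sh u (sh p j)" using assms unfolding sh_def by auto
  moreover have "sh p i < Suc N" "sh p j < Suc N" using ij' unfolding sh_def by auto
  ultimately show "mat_delete (mat_delete (char_poly_matrix (adj_matrix (Suc (Suc N)) H)) u p) p p $$ (i, j) =
         char_poly_matrix (adj_matrix N (del p (del u H))) $$ (i, j)"
    using ij' by (simp add: mat_delete_idx cpm_entry del_def)
qed auto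

lemma char_poly_leaf:
  assumes u: "u = Suc p" "u < Suc (Suc d)"
    and leafr: "\<And>j. j < Suc (Suc d) \<Longrightarrow> H u j \<longleftrightarrow> j = p"
    and leafc: "\<And>r. r < Suc (Suc d) \<Longrightarrow> H r u \<longleftrightarrow> r = p"
  shows "graph_char_poly (Suc (Suc d)) H =
     [:0,1:] * graph_char_poly (Suc d) (del u H) - graph_char_poly d (del p (del u H))"
proof -
  let ?C = "char_poly_matrix (adj_matrix (Suc (Suc d)) H)"
  have pl: "p < Suc (Suc d)" using u by auto
  have "det ?C = ?C $$ (u,u) * det (mat_delete ?C u u)
           - ?C $$ (u,p) * ?C $$ (p,u) * det (mat_delete (mat_delete ?C u p) p p)"
    by (rule det_leaf[OF cpm_carrier u]) (use u leafr leafc in \<open>auto simp: cpm_entry\<close>)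
  moreover have "?C $$ (u,u) = [:0,1:]" using u leafr[of u] by (simp add: cpm_entry)
  moreover have "?C $$ (u,p) = [:-1:]" using u leafr[of p] by (simp add: cpm_entry)
  moreover have "?C $$ (p,u) = [:-1:]" using u leafc[of p] by (simp add: cpm_entry)
  ultimately show ?thesis
    unfolding graph_char_poly_def char_poly_def cpm_del2[OF u(1)] cpm_del by simp
qed


lemma interp:
  fixes G :: "nat \<Rightarrow> 'a::comm_ring_1"
  assumes rec: "\<And>m. G (Suc (Suc m)) = (w+1) * G (Suc m) - w * G m"
  shows "(w-1) * G m = (w - w^m) * G 0 + (w^m - 1) * G 1"
proof (induction m rule: less_induct)
  case (less m)
  show ?case
  proof (cases m)
    case 0 then show ?thesis by (simp add: algebra_simps)
  next
    case (Suc m1)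
    show ?thesis
    proof (cases m1)
      case 0 then show ?thesis using Suc by (simp add: algebra_simps)
    next
      case (Suc m2)
      have i1: "(w-1) * G (Suc m2) = (w - w^(Suc m2)) * G 0 + (w^(Suc m2) - 1) * G 1"
        using less[of "Suc m2"] \<open>m = Suc m1\<close> Suc by simp
      have i2: "(w-1) * G m2 = (w - w^m2) * G 0 + (w^m2 - 1) * G 1"
        using less[of m2] \<open>m = Suc m1\<close> Suc by simp
      have gm: "G m = (w+1) * G (Suc m2) - w * G m2"
        using rec[of m2] \<open>m = Suc m1\<close> Suc by simp
      have "(w-1) * G m = (w+1) * ((w-1) * G (Suc m2)) - w * ((w-1) * G m2)"
        unfolding gm by (simp add: algebra_simps)
      also have "\<dots> = (w - w^m) * G 0 + (w^m - 1) * G 1"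
        unfolding i1 i2 using \<open>m = Suc m1\<close> Suc by (simp add: algebra_simps)
      finally show ?thesis .
    qed
  qed
qed

definition Sk :: "nat \<Rightarrow> nat list set" where
  "Sk k = {eps. length eps = k \<and> set eps \<subseteq> {0, 1}}"

lemma Sk_finite: "finite (Sk k)"
proof -
  have "Sk k = {xs. set xs \<subseteq> {0,1} \<and> length xs = k}" unfolding Sk_def by auto
  then show ?thesis using finite_lists_length_eq[of "{0,1::nat}" k] by simp
qed

lemma Sk_Suc: "Sk (Suc k) = Cons 0 ` Sk k \<union> Cons 1 ` Sk k"
proof (rule equalityI; rule subsetI)
  fix x assume "x \<in> Sk (Suc k)"
  then obtain e l where x: "x = e # l" "length l = k" "set l \<subseteq> {0,1}" "e \<in> {0,1}"
    unfolding Sk_def by (cases x) auto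
  then show "x \<in> Cons 0 ` Sk k \<union> Cons 1 ` Sk k" unfolding Sk_def by auto
qed (auto simp: Sk_def)

lemma multi:
  fixes w :: "'a::comm_ring_1" and F :: "nat list \<Rightarrow> 'a"
  assumes "\<And>ms i. length ms = k \<Longrightarrow> i < k \<Longrightarrow>
     (w-1) * F ms = (w - w^(ms!i)) * F (ms[i:=0]) + (w^(ms!i) - 1) * F (ms[i:=1])"
  shows "\<exists>P. \<forall>ms. length ms = k \<longrightarrow>
     (w-1)^k * F ms = (\<Sum>eps\<in>Sk k. w^(\<Sum>i<k. eps!i * ms!i) * P eps)"
  using assms
proof (induction k arbitrary: F)
  case 0
  have "Sk 0 = {[]}" unfolding Sk_def by auto
  then show ?case by (intro exI[of _ "\<lambda>_. F []"]) auto
next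
  case (Suc k)
  have h0: "\<exists>P. \<forall>ms. length ms = k \<longrightarrow>
     (w-1)^k * F (0#ms) = (\<Sum>eps\<in>Sk k. w^(\<Sum>i<k. eps!i * ms!i) * P eps)"
    by (rule Suc.IH) (use Suc.prems[of "0 # _" "Suc _"] in auto)
  have h1: "\<exists>P. \<forall>ms. length ms = k \<longrightarrow>
     (w-1)^k * F (1#ms) = (\<Sum>eps\<in>Sk k. w^(\<Sum>i<k. eps!i * ms!i) * P eps)"
    by (rule Suc.IH) (use Suc.prems[of "1 # _" "Suc _"] in auto)
  from h0 obtain P0 where P0: "\<And>ms. length ms = k \<Longrightarrow>
     (w-1)^k * F (0#ms) = (\<Sum>eps\<in>Sk k. w^(\<Sum>i<k. eps!i * ms!i) * P0 eps)" by blast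
  from h1 obtain P1 where P1: "\<And>ms. length ms = k \<Longrightarrow>
     (w-1)^k * F (1#ms) = (\<Sum>eps\<in>Sk k. w^(\<Sum>i<k. eps!i * ms!i) * P1 eps)" by blast
  define P where "P = (\<lambda>l. case l of [] \<Rightarrow> 0 | e # eps \<Rightarrow>
       (if e = 0 then w * P0 eps - P1 eps else P1 eps - P0 eps))"
  show ?case
  proof (intro exI[of _ P] allI impI)
    fix ms :: "nat list" assume len: "length ms = Suc k"
    then obtain m l where ms: "ms = m # l" and l: "length l = k" by (cases ms) auto
    define A where "A = (\<lambda>eps. w^(\<Sum>i<k. eps!i * l!i))"
    have ex: "(\<Sum>i<Suc k. (e#eps)!i * ms!i) = e * m + (\<Sum>i<k. eps!i * l!i)" for e eps
      unfolding ms sum.lessThan_Suc_shift by simp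
    have "(w-1)^Suc k * F ms = (w-1)^k * ((w-1) * F (m#l))" using ms by (simp add: algebra_simps)
    also have "(w-1) * F (m#l) = (w - w^m) * F (0#l) + (w^m - 1) * F (1#l)"
      using Suc.prems[of "m#l" 0] l by simp
    also have "(w-1)^k * ((w - w^m) * F (0#l) + (w^m - 1) * F (1#l))
       = (w - w^m) * ((w-1)^k * F (0#l)) + (w^m - 1) * ((w-1)^k * F (1#l))"
      by (simp add: algebra_simps)
    also have "\<dots> = (w - w^m) * (\<Sum>eps\<in>Sk k. A eps * P0 eps) + (w^m - 1) * (\<Sum>eps\<in>Sk k. A eps * P1 eps)"
      unfolding P0[OF l] P1[OF l] A_def ..
    also have "\<dots> = (\<Sum>eps\<in>Sk k. A eps * (w * P0 eps - P1 eps)) + (\<Sum>eps\<in>Sk k. w^m * (A eps * (P1 eps - P0 eps)))"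
      by (simp add: sum_distrib_left sum_subtractf algebra_simps flip: sum.distrib)
    also have "\<dots> = (\<Sum>eps\<in>Sk (Suc k). w^(\<Sum>i<Suc k. eps!i * ms!i) * P eps)"
    proof -
      have d: "Cons 0 ` Sk k \<inter> Cons 1 ` Sk k = {}" by auto
      have "(\<Sum>eps\<in>Sk (Suc k). w^(\<Sum>i<Suc k. eps!i * ms!i) * P eps)
        = (\<Sum>eps\<in>Cons 0 ` Sk k. w^(\<Sum>i<Suc k. eps!i * ms!i) * P eps)
          + (\<Sum>eps\<in>Cons 1 ` Sk k. w^(\<Sum>i<Suc k. eps!i * ms!i) * P eps)"
        unfolding Sk_Suc by (rule sum.union_disjoint) (use Sk_finite d in auto)
      also have "\<dots> = (\<Sum>eps\<in>Sk k. A eps * (w * P0 eps - P1 eps)) + (\<Sum>eps\<in>Sk k. w^m * (A eps * (P1 eps - P0 eps)))"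
        by (simp add: sum.reindex ex P_def A_def power_add mult.assoc del: sum.lessThan_Suc)
      finally show ?thesis by simp
    qed
    finally show "(w-1)^Suc k * F ms = (\<Sum>eps\<in>Sk (Suc k). w^(\<Sum>i<Suc k. eps!i * ms!i) * P eps)" .
  qed
qed

definition Tb :: "(nat \<Rightarrow> int poly) \<Rightarrow> int poly \<Rightarrow> nat \<Rightarrow> int poly \<Rightarrow> int poly" where
  "Tb h b N p = (\<Sum>j\<le>N. [:coeff p j:] * (h (N - j) * b ^ j))"

lemma Tb_x: "Tb h b (Suc N) (pCons 0 p) = b * Tb h b N p"
  unfolding Tb_def sum.atMost_Suc_shift by (simp add: sum_distrib_left algebra_simps)

lemma Tb_diff: "Tb h b N (p - q) = Tb h b N p - Tb h b N q"
  unfolding Tb_def sum_subtractf[symmetric] by (rule sum.cong) (simp_all add: algebra_simps smult_diff_left)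

lemma Tb_2:
  assumes h: "\<And>d. h (Suc (Suc d)) = w * h d" and deg: "degree q \<le> N"
  shows "Tb h b (Suc (Suc N)) q = w * Tb h b N q"
proof -
  have "Tb h b (Suc (Suc N)) q = (\<Sum>j\<le>N. [:coeff q j:] * (h (Suc (Suc N) - j) * b ^ j))"
    unfolding Tb_def using deg by (simp add: coeff_eq_0)
  also have "\<dots> = (\<Sum>j\<le>N. w * ([:coeff q j:] * (h (N - j) * b ^ j)))"
    by (rule sum.cong) (auto simp: Suc_diff_le h)
  finally show ?thesis unfolding Tb_def by (simp add: sum_distrib_left)
qed

definition hB :: "nat \<Rightarrow> int poly" where "hB d = (if even d then [:0,1:] ^ (d div 2) else 0)"
definition hN :: "nat \<Rightarrow> int poly" where "hN d = [:0,1:] ^ d"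

lemma hB2: "hB (Suc (Suc d)) = [:0,1:] * hB d" unfolding hB_def by auto
lemma hN2: "hN (Suc (Suc d)) = [:0,0,1:] * hN d" unfolding hN_def
  by (simp add: power2_eq_square algebra_simps)

lemma recip_Tb: "reciprocal_poly N E = (if bipartite N E then Tb hB [:1,1:] N (graph_char_poly N E)
   else Tb hN [:1,0,1:] N (graph_char_poly N E))"
  unfolding reciprocal_poly_def Tb_def hB_def hN_def Let_def
  by (auto intro!: sum.cong)

lemma off_mono: "j \<le> j' \<Longrightarrow> path_offset n ms j \<le> path_offset n ms j'"
proof -
  assume "j \<le> j'"
  then have "take j ms = take j (take j' ms)" by (simp add: min_def)
  moreover have "take j' ms = take j (take j' ms) @ drop j (take j' ms)" by (rule append_take_drop_id[symmetric])
  ultimately have "sum_list (take j' ms) = sum_list (take j ms) + sum_list (drop j (take j' ms))"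
    by (metis sum_list_append)
  then show ?thesis unfolding path_offset_def by simp
qed

lemma off_Suc: "j < length ms \<Longrightarrow> path_offset n ms (Suc j) = path_offset n ms j + ms ! j"
  unfolding path_offset_def by (simp add: take_Suc_conv_app_nth)

lemma off_lt: "j < j' \<Longrightarrow> j < length ms \<Longrightarrow> path_offset n ms j + ms ! j \<le> path_offset n ms j'"
  using off_mono[of "Suc j" j' n ms] off_Suc[of j ms n] by simp

lemma off_ge: "n \<le> path_offset n ms j" unfolding path_offset_def by simp

lemma off_end: "length ms = k \<Longrightarrow> path_offset n ms k = n + sum_list ms"
  unfolding path_offset_def by simp

lemma off_upd:
  assumes "i < length ms" "ms ! i = 0"
  shows "path_offset n (ms[i:=x]) j = path_offset n ms j + (if i < j then x else 0)"
proof (cases "i < j")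
  case True
  have "take j (ms[i:=x]) = (take j ms)[i:=x]" by (rule take_update_swap)
  moreover have "sum_list ((take j ms)[i:=x]) = sum_list (take j ms) + x"
    using assms True by (subst sum_list_update) auto
  ultimately show ?thesis using True unfolding path_offset_def by simp
next
  case False then show ?thesis unfolding path_offset_def by simp
qed

lemma sum_upd:
  fixes ms :: "nat list"
  assumes "i < length ms" "ms ! i = 0"
  shows "sum_list (ms[i:=x]) = sum_list ms + x"
  using assms by (subst sum_list_update) auto

lemma dirj_del:
  fixes a b u v o0 o1 c0 c1 :: nat
  assumes "v < u" "(o1 = o0 \<and> c1 = c0 \<and> o0 + c0 \<le> u) \<or> (o1 = o0 \<and> u = o0 + c0 \<and> c1 = Suc c0) \<or> (o1 = Suc o0 \<and> c1 = c0 \<and> u \<le> o0)"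
  shows "(0 < c1 \<and> ((sh u a = v \<and> sh u b = o1) \<or> (o1 \<le> sh u a \<and> sh u b = sh u a + 1 \<and> sh u b < o1 + c1)))
     \<longleftrightarrow> (0 < c0 \<and> ((a = v \<and> b = o0) \<or> (o0 \<le> a \<and> b = a + 1 \<and> b < o0 + c0)))"
  using assms unfolding sh_def by auto

lemma del_step:
  assumes sg: "simple_graph n E" and vsn: "\<forall>v\<in>set vs. v < n"
    and len: "length ms = length vs" and i: "i < length vs" and z: "ms ! i = 0"
  shows "del (path_offset n ms i + m) (attach_paths n E vs (ms[i:=Suc m])) = attach_paths n E vs (ms[i:=m])"
proof -
  let ?u = "path_offset n ms i + m"
  have nu: "n \<le> ?u" using off_ge[of n ms i] by simp
  have Ebd: "\<And>x y. E x y \<Longrightarrow> x < n \<and> y < n" using sg unfolding simple_graph_def by blast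
  have Eeq: "E (sh ?u a) (sh ?u b) = E a b" for a b
    using nu by (cases "a < ?u"; cases "b < ?u") (auto simp: sh_def dest: Ebd)
  have per: "(0 < ms[i:=Suc m] ! j \<and> ((sh ?u a = vs ! j \<and> sh ?u b = path_offset n (ms[i:=Suc m]) j) \<or>
        (path_offset n (ms[i:=Suc m]) j \<le> sh ?u a \<and> sh ?u b = sh ?u a + 1 \<and> sh ?u b < path_offset n (ms[i:=Suc m]) j + ms[i:=Suc m] ! j)))
     \<longleftrightarrow> (0 < ms[i:=m] ! j \<and> ((a = vs ! j \<and> b = path_offset n (ms[i:=m]) j) \<or>
        (path_offset n (ms[i:=m]) j \<le> a \<and> b = a + 1 \<and> b < path_offset n (ms[i:=m]) j + ms[i:=m] ! j)))"
    if j: "j < length vs" for j a b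
  proof (rule dirj_del)
    have "vs ! j < n" using vsn j by simp
    then show "vs ! j < ?u" using nu by linarith
    have o1: "path_offset n (ms[i:=Suc m]) j = path_offset n ms j + (if i < j then Suc m else 0)"
      using off_upd[of i ms n "Suc m" j] len i z by simp
    have o0: "path_offset n (ms[i:=m]) j = path_offset n ms j + (if i < j then m else 0)"
      using off_upd[of i ms n m j] len i z by simp
    consider "j < i" | "j = i" | "i < j" by arith
    then show "(path_offset n (ms[i:=Suc m]) j = path_offset n (ms[i:=m]) j \<and> ms[i:=Suc m] ! j = ms[i:=m] ! j \<and> path_offset n (ms[i:=m]) j + ms[i:=m] ! j \<le> ?u) \<or>
    (path_offset n (ms[i:=Suc m]) j = path_offset n (ms[i:=m]) j \<and> ?u = path_offset n (ms[i:=m]) j + ms[i:=m] ! j \<and> ms[i:=Suc m] ! j = Suc (ms[i:=m] ! j)) \<or>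
    (path_offset n (ms[i:=Suc m]) j = Suc (path_offset n (ms[i:=m]) j) \<and> ms[i:=Suc m] ! j = ms[i:=m] ! j \<and> ?u \<le> path_offset n (ms[i:=m]) j)"
    proof cases
      case 1
      then show ?thesis using o1 o0 off_lt[of j i ms n] len j by auto
    next
      case 2
      then show ?thesis using o1 o0 len j by auto
    next
      case 3
      then show ?thesis using o1 o0 off_mono[of i j n ms] len j by auto
    qed
  qed
  have ad: "attach_dir n vs (ms[i:=Suc m]) (sh ?u a) (sh ?u b) = attach_dir n vs (ms[i:=m]) a b" for a b
    unfolding attach_dir_def using per[of _ a b] by auto
  show ?thesis
    unfolding del_def attach_paths_def using Eeq ad by (intro ext) simp
qed

lemma leafj:
  fixes oo c u v b :: nat
  assumes "v < u" "oo + c \<le> u \<or> u < oo"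
  shows "\<not> (0 < c \<and> ((u = v \<and> b = oo) \<or> (oo \<le> u \<and> b = u + 1 \<and> b < oo + c)))"
    "\<not> (0 < c \<and> ((b = v \<and> u = oo) \<or> (oo \<le> b \<and> u = b + 1 \<and> u < oo + c)))"
  using assms by auto

lemma leafi:
  fixes oo c u v b :: nat
  assumes "v < oo" "c = Suc m" "u = oo + m"
  shows "\<not> (0 < c \<and> ((u = v \<and> b = oo) \<or> (oo \<le> u \<and> b = u + 1 \<and> b < oo + c)))"
    "(0 < c \<and> ((b = v \<and> u = oo) \<or> (oo \<le> b \<and> u = b + 1 \<and> u < oo + c))) \<longleftrightarrow> b = (if m = 0 then v else u - 1)"
  using assms by auto

lemma leaf_step:
  fixes m :: nat
  assumes sg: "simple_graph n E" and vsn: "\<forall>v\<in>set vs. v < n"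
    and len: "length ms = length vs" and i: "i < length vs" and z: "ms ! i = 0"
  defines "u \<equiv> path_offset n ms i + m"
  shows "attach_paths n E vs (ms[i:=Suc m]) u b \<longleftrightarrow> b = (if m = 0 then vs ! i else u - 1)"
    "attach_paths n E vs (ms[i:=Suc m]) b u \<longleftrightarrow> b = (if m = 0 then vs ! i else u - 1)"
proof -
  have nu: "n \<le> u" using off_ge[of n ms i] u_def by simp
  have Ebd: "\<And>x y. E x y \<Longrightarrow> x < n \<and> y < n" using sg unfolding simple_graph_def by blast
  have E1: "\<not> E u b" "\<not> E b u" using nu Ebd by force+
  have vj: "vs ! j < n" if "j < length vs" for j using vsn that by simp
  have o1: "path_offset n (ms[i:=Suc m]) j = path_offset n ms j + (if i < j then Suc m else 0)" for j
      using off_upd[of i ms n "Suc m" j] len i z by simp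
  have other: "\<not> (0 < ms[i:=Suc m] ! j \<and> ((u = vs ! j \<and> b = path_offset n (ms[i:=Suc m]) j) \<or> (path_offset n (ms[i:=Suc m]) j \<le> u \<and> b = u + 1 \<and> b < path_offset n (ms[i:=Suc m]) j + ms[i:=Suc m] ! j)))
     \<and> \<not> (0 < ms[i:=Suc m] ! j \<and> ((b = vs ! j \<and> u = path_offset n (ms[i:=Suc m]) j) \<or> (path_offset n (ms[i:=Suc m]) j \<le> b \<and> u = b + 1 \<and> u < path_offset n (ms[i:=Suc m]) j + ms[i:=Suc m] ! j)))"
    if j: "j < length vs" "j \<noteq> i" for j
  proof -
    have vu: "vs ! j < u" using vj[OF j(1)] nu by linarith
    have "path_offset n (ms[i:=Suc m]) j + ms[i:=Suc m] ! j \<le> u \<or> u < path_offset n (ms[i:=Suc m]) j"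
    proof (cases "j < i")
      case True then show ?thesis using o1[of j] off_lt[of j i ms n] len j u_def by auto
    next
      case False then show ?thesis using o1[of j] off_mono[of i j n ms] len j u_def by auto
    qed
    from leafj[OF vu this, of b] show ?thesis by blast
  qed
  have oi: "path_offset n (ms[i:=Suc m]) i = path_offset n ms i" using o1[of i] by simp
  have ci: "ms[i:=Suc m] ! i = Suc m" using len i by simp
  have vi: "vs ! i < path_offset n ms i" using vj[OF i] off_ge[of n ms i] by linarith
  note li = leafi[of "vs!i" "path_offset n ms i" "Suc m" m u b, OF vi refl u_def[THEN meta_eq_to_obj_eq]]
  let ?ms1 = "ms[i:=Suc m]"
  have d1: "\<not> attach_dir n vs ?ms1 u b"
  proof
    assume "attach_dir n vs ?ms1 u b"
    then obtain j where j: "j < length vs" and P: "0 < ?ms1 ! j \<and> ((u = vs ! j \<and> b = path_offset n ?ms1 j) \<or>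
        (path_offset n ?ms1 j \<le> u \<and> b = u + 1 \<and> b < path_offset n ?ms1 j + ?ms1 ! j))"
      unfolding attach_dir_def by blast
    show False
    proof (cases "j = i")
      case True then show False using P li(1) ci oi by simp
    next
      case False then show False using P other[OF j False] by blast
    qed
  qed
  have d2: "attach_dir n vs ?ms1 b u \<longleftrightarrow> b = (if m = 0 then vs ! i else u - 1)"
  proof
    assume "attach_dir n vs ?ms1 b u"
    then obtain j where j: "j < length vs" and P: "0 < ?ms1 ! j \<and> ((b = vs ! j \<and> u = path_offset n ?ms1 j) \<or>
        (path_offset n ?ms1 j \<le> b \<and> u = b + 1 \<and> u < path_offset n ?ms1 j + ?ms1 ! j))"
      unfolding attach_dir_def by blast
    show "b = (if m = 0 then vs ! i else u - 1)"
    proof (cases "j = i")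
      case True then show ?thesis using P li(2) ci oi by simp
    next
      case False then show ?thesis using P other[OF j False] by blast
    qed
  next
    assume "b = (if m = 0 then vs ! i else u - 1)"
    then have "0 < ?ms1 ! i \<and> ((b = vs ! i \<and> u = path_offset n ?ms1 i) \<or>
        (path_offset n ?ms1 i \<le> b \<and> u = b + 1 \<and> u < path_offset n ?ms1 i + ?ms1 ! i))"
      using li(2) ci oi by simp
    then show "attach_dir n vs ?ms1 b u" unfolding attach_dir_def using i by blast
  qed
  show "attach_paths n E vs (ms[i:=Suc m]) u b \<longleftrightarrow> b = (if m = 0 then vs ! i else u - 1)"
    unfolding attach_paths_def using E1 d1 d2 by blast
  show "attach_paths n E vs (ms[i:=Suc m]) b u \<longleftrightarrow> b = (if m = 0 then vs ! i else u - 1)"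
    unfolding attach_paths_def using E1 d1 d2 by blast
qed


lemma bip_leaf:
  assumes u: "u < Suc d" and qu: "q \<noteq> u"
    and r: "\<And>b. H u b \<longleftrightarrow> b = q" and c: "\<And>b. H b u \<longleftrightarrow> b = q"
  shows "bipartite (Suc d) H \<longleftrightarrow> bipartite d (del u H)"
proof
  assume "bipartite (Suc d) H"
  then obtain col :: "nat \<Rightarrow> bool" where col: "\<forall>a<Suc d. \<forall>b<Suc d. H a b \<longrightarrow> col a \<noteq> col b"
    unfolding bipartite_def by blast
  have shl: "sh u a < Suc d" if "a < d" for a using that unfolding sh_def by simp
  have "\<forall>a<d. \<forall>b<d. del u H a b \<longrightarrow> col (sh u a) \<noteq> col (sh u b)"
  proof (intro allI impI)
    fix a b assume "a < d" "b < d" "del u H a b"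
    then show "col (sh u a) \<noteq> col (sh u b)"
      using col shl[of a] shl[of b] unfolding del_def by simp
  qed
  then show "bipartite d (del u H)" unfolding bipartite_def by (intro exI[of _ "\<lambda>x. col (sh u x)"])
next
  assume "bipartite d (del u H)"
  then obtain col :: "nat \<Rightarrow> bool" where col: "\<forall>a<d. \<forall>b<d. del u H a b \<longrightarrow> col a \<noteq> col b"
    unfolding bipartite_def by blast
  define iv where "iv = (\<lambda>x::nat. if x < u then x else x - 1)"
  define col' where "col' = (\<lambda>x. if x = u then \<not> col (iv q) else col (iv x))"
  have shiv: "sh u (iv x) = x" if "x \<noteq> u" for x using that unfolding sh_def iv_def by auto
  have ivl: "iv x < d" if "x \<noteq> u" "x < Suc d" for x using that u unfolding iv_def by auto
  have "\<forall>a<Suc d. \<forall>b<Suc d. H a b \<longrightarrow> col' a \<noteq> col' b"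
  proof (intro allI impI)
    fix a b assume a: "a < Suc d" and b: "b < Suc d" and h: "H a b"
    show "col' a \<noteq> col' b"
    proof (cases "a = u")
      case True
      then have "b = q" using r h by simp
      then show ?thesis using True qu unfolding col'_def by simp
    next
      case aF: False
      show ?thesis
      proof (cases "b = u")
        case True
        then have "a = q" using c h by simp
        then show ?thesis using True qu unfolding col'_def by simp
      next
        case False
        have "del u H (iv a) (iv b)" unfolding del_def using shiv aF False h by simp
        then show ?thesis using col ivl[OF aF a] ivl[OF False b] aF False unfolding col'_def by simp
      qed
    qed
  qed
  then show "bipartite (Suc d) H" unfolding bipartite_def by (intro exI[of _ col'])
qed

lemma deg_gcp: "degree (graph_char_poly N H) = N"
  unfolding graph_char_poly_def adj_matrix_def
  using degree_monic_char_poly[of "mat N N (\<lambda>(i, j). if H i j then 1 else 0 :: int)" N] by simp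

context
  fixes n :: nat and E :: "nat \<Rightarrow> nat \<Rightarrow> bool" and vs :: "nat list" and ms :: "nat list" and i :: nat
  assumes sg: "simple_graph n E" and vsn: "\<forall>v\<in>set vs. v < n"
    and len: "length ms = length vs" and i: "i < length vs" and z: "ms ! i = 0"
begin

lemma Nupd: "n + sum_list (ms[i:=x]) = n + sum_list ms + x"
  using sum_upd[of i ms x] len i z by simp

lemma Oi_le: "path_offset n ms i \<le> n + sum_list ms"
  using off_mono[of i "length ms" n ms] off_end[of ms "length ms" n] len i by simp

lemma chi_rec:
  "graph_char_poly (n + sum_list ms + Suc (Suc m)) (attach_paths n E vs (ms[i:=Suc (Suc m)]))
   = [:0,1:] * graph_char_poly (n + sum_list ms + Suc m) (attach_paths n E vs (ms[i:=Suc m]))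
     - graph_char_poly (n + sum_list ms + m) (attach_paths n E vs (ms[i:=m]))"
proof -
  let ?u = "path_offset n ms i + Suc m"
  let ?p = "path_offset n ms i + m"
  have "graph_char_poly (Suc (Suc (n + sum_list ms + m))) (attach_paths n E vs (ms[i:=Suc (Suc m)]))
     = [:0,1:] * graph_char_poly (Suc (n + sum_list ms + m)) (del ?u (attach_paths n E vs (ms[i:=Suc (Suc m)])))
       - graph_char_poly (n + sum_list ms + m) (del ?p (del ?u (attach_paths n E vs (ms[i:=Suc (Suc m)]))))"
  proof (rule char_poly_leaf)
    show "?u = Suc ?p" by simp
    show "?u < Suc (Suc (n + sum_list ms + m))" using Oi_le by linarith
    show "attach_paths n E vs (ms[i := Suc (Suc m)]) ?u j = (j = ?p)" for j
      using leaf_step(1)[OF sg vsn len i z, of "Suc m" j] by simp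
    show "attach_paths n E vs (ms[i := Suc (Suc m)]) j ?u = (j = ?p)" for j
      using leaf_step(2)[OF sg vsn len i z, of "Suc m" j] by simp
  qed
  also have "del ?u (attach_paths n E vs (ms[i:=Suc (Suc m)])) = attach_paths n E vs (ms[i:=Suc m])"
    using del_step[OF sg vsn len i z, of "Suc m"] by simp
  also have "del ?p (attach_paths n E vs (ms[i:=Suc m])) = attach_paths n E vs (ms[i:=m])"
    using del_step[OF sg vsn len i z, of m] by simp
  finally show ?thesis by simp
qed

lemma bip_step:
  "bipartite (n + sum_list ms + Suc m) (attach_paths n E vs (ms[i:=Suc m]))
   \<longleftrightarrow> bipartite (n + sum_list ms + m) (attach_paths n E vs (ms[i:=m]))"
proof -
  let ?u = "path_offset n ms i + m"
  let ?q = "if m = 0 then vs ! i else ?u - 1"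
  have vi: "vs ! i < n" using vsn i by simp
  have "bipartite (Suc (n + sum_list ms + m)) (attach_paths n E vs (ms[i:=Suc m]))
     \<longleftrightarrow> bipartite (n + sum_list ms + m) (del ?u (attach_paths n E vs (ms[i:=Suc m])))"
  proof (rule bip_leaf)
    show "?u < Suc (n + sum_list ms + m)" using Oi_le by linarith
    show "?q \<noteq> ?u" using vi off_ge[of n ms i] by auto
    show "attach_paths n E vs (ms[i := Suc m]) ?u b = (b = ?q)" for b
      using leaf_step(1)[OF sg vsn len i z, of m b] by simp
    show "attach_paths n E vs (ms[i := Suc m]) b ?u = (b = ?q)" for b
      using leaf_step(2)[OF sg vsn len i z, of m b] by simp
  qed
  also have "del ?u (attach_paths n E vs (ms[i:=Suc m])) = attach_paths n E vs (ms[i:=m])"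
    using del_step[OF sg vsn len i z, of m] by simp
  finally show ?thesis by simp
qed

lemma bip_all:
  "bipartite (n + sum_list ms + x) (attach_paths n E vs (ms[i:=x]))
   \<longleftrightarrow> bipartite (n + sum_list ms) (attach_paths n E vs ms)"
proof (induction x)
  case 0 then show ?case using z by (simp add: list_update_id[of ms i, unfolded z])
next
  case (Suc x) then show ?case using bip_step[of x] by simp
qed

end


lemma coord:
  fixes h :: "nat \<Rightarrow> int poly"
  assumes sg: "simple_graph n E" and vsn: "\<forall>v\<in>set vs. v < n"
    and h2: "\<And>d. h (Suc (Suc d)) = w * h d" and bbw: "bb = w + 1"
    and len: "length ms = length vs" and i: "i < length vs"
  defines "T \<equiv> (\<lambda>ms. Tb h bb (n + sum_list ms) (graph_char_poly (n + sum_list ms) (attach_paths n E vs ms)))"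
  shows "(w-1) * T ms = (w - w^(ms!i)) * T (ms[i:=0]) + (w^(ms!i) - 1) * T (ms[i:=1])"
proof -
  define ms0 where "ms0 = ms[i:=0]"
  have len0: "length ms0 = length vs" using len unfolding ms0_def by simp
  have z0: "ms0 ! i = 0" using len i unfolding ms0_def by simp
  define N0 where "N0 = n + sum_list ms0"
  define G where "G = (\<lambda>x. T (ms0[i:=x]))"
  define chi where "chi = (\<lambda>x. graph_char_poly (N0 + x) (attach_paths n E vs (ms0[i:=x])))"
  have G: "G x = Tb h bb (N0 + x) (chi x)" for x
    unfolding G_def T_def chi_def N0_def using Nupd[OF sg vsn len0 i z0, of x] by (simp add: add.assoc)
  have rec: "G (Suc (Suc m)) = (w+1) * G (Suc m) - w * G m" for m
  proof -
    have c0: "chi (Suc (Suc m)) = [:0,1:] * chi (Suc m) - chi m"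
      unfolding chi_def N0_def using chi_rec[OF sg vsn len0 i z0, of m] by simp
    have c: "chi (Suc (Suc m)) = pCons 0 (chi (Suc m)) - chi m"
      unfolding c0 pCons_0_as_mult[of "chi (Suc m)"] ..
    have "G (Suc (Suc m)) = Tb h bb (Suc (N0 + Suc m)) (pCons 0 (chi (Suc m))) - Tb h bb (Suc (Suc (N0 + m))) (chi m)"
      unfolding G c Tb_diff by simp
    also have "\<dots> = bb * G (Suc m) - w * G m"
      unfolding Tb_x G by (subst Tb_2[where h=h and w=w, OF h2]) (auto simp: chi_def deg_gcp)
    finally show ?thesis using bbw by simp
  qed
  have "(w-1) * G (ms!i) = (w - w^(ms!i)) * G 0 + (w^(ms!i) - 1) * G 1"
    by (rule interp[where G=G and w=w, OF rec])
  moreover have "ms0[i:=ms!i] = ms" unfolding ms0_def by simp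
  moreover have "ms0[i:=0] = ms0" "ms0[i:=1] = ms[i:=1]" unfolding ms0_def by simp_all
  ultimately show ?thesis unfolding G_def ms0_def by simp
qed

lemma bip_const:
  assumes sg: "simple_graph n E" and vsn: "\<forall>v\<in>set vs. v < n"
  shows "length ms = length vs \<Longrightarrow> bipartite (n + sum_list ms) (attach_paths n E vs ms)
     = bipartite n (attach_paths n E vs (replicate (length vs) 0))"
proof (induction "sum_list ms" arbitrary: ms rule: less_induct)
  case less
  show ?case
  proof (cases "\<forall>j<length vs. ms ! j = 0")
    case True
    then have "ms = replicate (length vs) 0" using less.prems by (simp add: list_eq_iff_nth_eq)
    then show ?thesis by (simp add: sum_list_replicate)
  next
    case False
    then obtain i where i: "i < length vs" and nz: "ms ! i \<noteq> 0" by blast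
    define ms0 where "ms0 = ms[i:=0]"
    have len0: "length ms0 = length vs" using less.prems unfolding ms0_def by simp
    have z0: "ms0 ! i = 0" using less.prems i unfolding ms0_def by simp
    have bk: "ms0[i:=ms!i] = ms" unfolding ms0_def by simp
    have N: "n + sum_list ms = n + sum_list ms0 + ms ! i"
      using Nupd[OF sg vsn len0 i z0, of "ms!i"] bk by simp
    have "bipartite (n + sum_list ms) (attach_paths n E vs ms) = bipartite (n + sum_list ms0) (attach_paths n E vs ms0)"
      using bip_all[OF sg vsn len0 i z0, of "ms!i"] bk N by (simp add: add.assoc)
    also have "\<dots> = bipartite n (attach_paths n E vs (replicate (length vs) 0))"
      by (rule less.hyps) (use N nz len0 in auto)
    finally show ?thesis .
  qed
qed

lemma finish:
  fixes h :: "nat \<Rightarrow> int poly"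
  assumes sg: "simple_graph n E" and vsn: "\<forall>v\<in>set vs. v < n"
    and h2: "\<And>d. h (Suc (Suc d)) = w * h d" and bbw: "bb = w + 1"
    and rT: "\<And>ms. length ms = length vs \<Longrightarrow> reciprocal_poly (n + sum_list ms) (attach_paths n E vs ms)
        = Tb h bb (n + sum_list ms) (graph_char_poly (n + sum_list ms) (attach_paths n E vs ms))"
    and yw: "\<And>ms. length ms = length vs \<Longrightarrow>
        (if bipartite (n + sum_list ms) (attach_paths n E vs ms) then [:0, 1:] else [:0, 0, 1:] :: int poly) = w"
  shows "\<exists>P :: nat list \<Rightarrow> int poly.
    \<forall>ms :: nat list. length ms = length vs \<and> (\<forall>m \<in> set ms. 2 \<le> m) \<longrightarrow>
      (let N = n + sum_list ms;
           E' = attach_paths n E vs ms;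
           y2 = (if bipartite N E' then [:0, 1:] else [:0, 0, 1:] :: int poly)
       in (y2 - 1) ^ length vs * reciprocal_poly N E' =
          (\<Sum>eps \<in> {eps. length eps = length vs \<and> set eps \<subseteq> {0, 1}}.
              y2 ^ (\<Sum>i < length vs. eps ! i * ms ! i) * P eps))"
proof -
  define T where "T = (\<lambda>ms. Tb h bb (n + sum_list ms) (graph_char_poly (n + sum_list ms) (attach_paths n E vs ms)))"
  have "\<exists>P. \<forall>ms. length ms = length vs \<longrightarrow>
     (w-1)^length vs * T ms = (\<Sum>eps\<in>Sk (length vs). w^(\<Sum>i<length vs. eps!i * ms!i) * P eps)"
  proof (rule multi)
    fix ms :: "nat list" and i :: nat assume "length ms = length vs" "i < length vs"
    then show "(w-1) * T ms = (w - w^(ms!i)) * T (ms[i:=0]) + (w^(ms!i) - 1) * T (ms[i:=1])"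
      unfolding T_def by (rule coord[where h=h and w=w and bb=bb and n=n and E=E and vs=vs, OF sg vsn h2 bbw])
  qed
  then obtain P where P: "\<And>ms. length ms = length vs \<Longrightarrow>
     (w-1)^length vs * T ms = (\<Sum>eps\<in>Sk (length vs). w^(\<Sum>i<length vs. eps!i * ms!i) * P eps)" by blast
  show ?thesis
  proof (intro exI[of _ P] allI impI)
    fix ms :: "nat list" assume "length ms = length vs \<and> (\<forall>m \<in> set ms. 2 \<le> m)"
    then have len: "length ms = length vs" by simp
    show "let N = n + sum_list ms;
           E' = attach_paths n E vs ms;
           y2 = (if bipartite N E' then [:0, 1:] else [:0, 0, 1:] :: int poly)
       in (y2 - 1) ^ length vs * reciprocal_poly N E' =
          (\<Sum>eps \<in> {eps. length eps = length vs \<and> set eps \<subseteq> {0, 1}}.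
              y2 ^ (\<Sum>i < length vs. eps ! i * ms ! i) * P eps)"
      unfolding Let_def yw[OF len] rT[OF len] using P[OF len] unfolding T_def Sk_def by simp
  qed
qed

theorem lemma11:
  fixes n :: nat and E :: "nat \<Rightarrow> nat \<Rightarrow> bool" and vs :: "nat list"
  assumes "simple_graph n E"
    and "\<forall>v \<in> set vs. v < n"
  shows "\<exists>P :: nat list \<Rightarrow> int poly.
    \<forall>ms :: nat list. length ms = length vs \<and> (\<forall>m \<in> set ms. 2 \<le> m) \<longrightarrow>
      (let N = n + sum_list ms;
           E' = attach_paths n E vs ms;
           y2 = (if bipartite N E' then [:0, 1:] else [:0, 0, 1:] :: int poly)
       in (y2 - 1) ^ length vs * reciprocal_poly N E' =
          (\<Sum>eps \<in> {eps. length eps = length vs \<and> set eps \<subseteq> {0, 1}}.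
              y2 ^ (\<Sum>i < length vs. eps ! i * ms ! i) * P eps))"
proof (cases "bipartite n (attach_paths n E vs (replicate (length vs) 0))")
  case True
  show ?thesis
  proof (rule finish[OF assms, of hB "[:0,1:]" "[:1,1:]"])
    show "hB (Suc (Suc d)) = [:0,1:] * hB d" for d by (rule hB2)
    show "[:1,1:] = [:0,1:] + (1 :: int poly)" by (simp add: one_pCons)
    fix ms :: "nat list" assume len: "length ms = length vs"
    have b: "bipartite (n + sum_list ms) (attach_paths n E vs ms)"
      using bip_const[OF assms len] True by simp
    show "reciprocal_poly (n + sum_list ms) (attach_paths n E vs ms)
        = Tb hB [:1,1:] (n + sum_list ms) (graph_char_poly (n + sum_list ms) (attach_paths n E vs ms))"
      using b by (simp add: recip_Tb)
    show "(if bipartite (n + sum_list ms) (attach_paths n E vs ms) then [:0, 1:] else [:0, 0, 1:] :: int poly) = [:0,1:]"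
      using b by simp
  qed
next
  case False
  show ?thesis
  proof (rule finish[OF assms, of hN "[:0,0,1:]" "[:1,0,1:]"])
    show "hN (Suc (Suc d)) = [:0,0,1:] * hN d" for d by (rule hN2)
    show "[:1,0,1:] = [:0,0,1:] + (1 :: int poly)" by (simp add: one_pCons)
    fix ms :: "nat list" assume len: "length ms = length vs"
    have b: "\<not> bipartite (n + sum_list ms) (attach_paths n E vs ms)"
      using bip_const[OF assms len] False by simp
    show "reciprocal_poly (n + sum_list ms) (attach_paths n E vs ms)
        = Tb hN [:1,0,1:] (n + sum_list ms) (graph_char_poly (n + sum_list ms) (attach_paths n E vs ms))"
      using b by (simp add: recip_Tb)
    show "(if bipartite (n + sum_list ms) (attach_paths n E vs ms) then [:0, 1:] else [:0, 0, 1:] :: int poly) = [:0,0,1:]"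
      using b by simp
  qed
qed

end
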